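(* Let $\mathbb X,\mathbb Y_1,\mathbb Y_2,\mathbb X^\sharp,\mathbb Y_1^\sharp,\mathbb Y_2^\sharp$ be sets with couplings $c:\mathbb X\times\mathbb X^\sharp\to\overline{\mathbb R}$, $d_1:\mathbb Y_1\times\mathbb Y_1^\sharp\to\overline{\mathbb R}$, $d_2:\mathbb Y_2\times\mathbb Y_2^\sharp\to\overline{\mathbb R}$, and let $\phi:\mathbb Y_1\times\mathbb X\times\mathbb Y_2\to\overline{\mathbb R}$. Define $\phi^\sharp:\mathbb Y_1^\sharp\times\mathbb X^\sharp\times\mathbb Y_2^\sharp\to\overline{\mathbb R}$ by $$\phi^\sharp(y_1^\sharp,x^\sharp,y_2^\sharp)=\sup_{(y_1,x,y_2)\in\mathbb Y_1\times\mathbb X\times\mathbb Y_2}\Big(c(x,x^\sharp)\mathbin{\underset{\cdot}{+}} d_1(y_1,y_1^\sharp)\mathbin{\underset{\cdot}{+}} d_2(y_2,y_2^\sharp)\mathbin{\underset{\cdot}{+}}\big(-\phi(y_1,x,y_2)\big)\Big).$$ Then for all $f:\mathbb X\to\overline{\mathbb R}$, $g_1:\mathbb Y_1\to\overline{\mathbb R}$, $g_2:\mathbb Y_2\to\overline{\mathbb R}$: if $f(x)\ge (g_1\square^{\phi} g_2)(x)$ for all $x\in\mathbb X$, then $f^{c}(x^\sharp)\le\big(g_1^{-d_1}\square^{\phi^\sharp}g_2^{-d_2}\big)(x^\sharp)$ for all $x^\sharp\in\mathbb X^\sharp$.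
   Context: $\overline{\mathbb R}=[-\infty,+\infty]$. The Moreau lower addition $\mathbin{\underset{\cdot}{+}}$ is usual addition extended by $(+\infty)\mathbin{\underset{\cdot}{+}}(-\infty)=(-\infty)\mathbin{\underset{\cdot}{+}}(+\infty)=-\infty$; the Moreau upper addition $\mathbin{\overset{\cdot}{+}}$ is usual addition extended by $(+\infty)\mathbin{\overset{\cdot}{+}}(-\infty)=(-\infty)\mathbin{\overset{\cdot}{+}}(+\infty)=+\infty$. Generalized inf-convolution: for sets $A,B,C$, a function $\psi:A\times B\times C\to\overline{\mathbb R}$ and $h_1:A\to\overline{\mathbb R}$, $h_2:C\to\overline{\mathbb R}$, $(h_1\square^{\psi}h_2)(b)=\inf_{a\in A,\,z\in C}\big(h_1(a)\mathbin{\overset{\cdot}{+}}\psi(a,b,z)\mathbin{\overset{\cdot}{+}} h_2(z)\big)$. Conjugates: $f^{c}(x^\sharp)=\sup_{x}\big(c(x,x^\sharp)\mathbin{\underset{\cdot}{+}}(-f(x))\big)$ and $g_i^{-d_i}(y_i^\sharp)=\sup_{y_i}\big((-d_i(y_i,y_i^\sharp))\mathbin{\underset{\cdot}{+}}(-g_i(y_i))\big)$. *)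

theory Defs
  imports "HOL-Library.Extended_Real"
begin

definition lower_add :: "ereal \<Rightarrow> ereal \<Rightarrow> ereal" (infixl "+\<^sub>l" 65) where
  "a +\<^sub>l b = (if (a = \<infinity> \<and> b = -\<infinity>) \<or> (a = -\<infinity> \<and> b = \<infinity>) then -\<infinity> else a + b)"

definition upper_add :: "ereal \<Rightarrow> ereal \<Rightarrow> ereal" (infixl "+\<^sub>u" 65) where
  "a +\<^sub>u b = (if (a = \<infinity> \<and> b = -\<infinity>) \<or> (a = -\<infinity> \<and> b = \<infinity>) then \<infinity> else a + b)"

definition inf_conv ::
  "('a \<Rightarrow> ereal) \<Rightarrow> ('a \<Rightarrow> 'b \<Rightarrow> 'c \<Rightarrow> ereal) \<Rightarrow> ('c \<Rightarrow> ereal) \<Rightarrow> 'b \<Rightarrow> ereal" where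
  "inf_conv h1 \<psi> h2 b = (INF (a, z) \<in> UNIV. h1 a +\<^sub>u \<psi> a b z +\<^sub>u h2 z)"

definition conj_c :: "('x \<Rightarrow> 'xs \<Rightarrow> ereal) \<Rightarrow> ('x \<Rightarrow> ereal) \<Rightarrow> 'xs \<Rightarrow> ereal" where
  "conj_c c f xs = (SUP x \<in> UNIV. c x xs +\<^sub>l (- f x))"

definition conj_neg :: "('y \<Rightarrow> 'ys \<Rightarrow> ereal) \<Rightarrow> ('y \<Rightarrow> ereal) \<Rightarrow> 'ys \<Rightarrow> ereal" where
  "conj_neg d g ys = (SUP y \<in> UNIV. (- d y ys) +\<^sub>l (- g y))"

definition phi_sharp ::
  "('x \<Rightarrow> 'xs \<Rightarrow> ereal) \<Rightarrow> ('y1 \<Rightarrow> 'y1s \<Rightarrow> ereal) \<Rightarrow> ('y2 \<Rightarrow> 'y2s \<Rightarrow> ereal)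
   \<Rightarrow> ('y1 \<Rightarrow> 'x \<Rightarrow> 'y2 \<Rightarrow> ereal) \<Rightarrow> 'y1s \<Rightarrow> 'xs \<Rightarrow> 'y2s \<Rightarrow> ereal" where
  "phi_sharp c d1 d2 \<phi> y1s xs y2s =
     (SUP (y1, x, y2) \<in> UNIV. c x xs +\<^sub>l d1 y1 y1s +\<^sub>l d2 y2 y2s +\<^sub>l (- \<phi> y1 x y2))"

end

theory Submission
  imports Defs
begin

lemma key4:
  fixes c a b p e d1 d2 :: ereal
  shows "c +\<^sub>l a +\<^sub>l p +\<^sub>l e \<le> ((- d1) +\<^sub>l a) +\<^sub>u (c +\<^sub>l d1 +\<^sub>l d2 +\<^sub>l p) +\<^sub>u ((- d2) +\<^sub>l e)"
  by (cases c; cases a; cases p; cases e; cases d1; cases d2) (auto simp: lower_add_def upper_add_def)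
lemma upper_mono:
  fixes a b a' b' :: ereal
  shows "a \<le> a' \<Longrightarrow> b \<le> b' \<Longrightarrow> a +\<^sub>u b \<le> a' +\<^sub>u b'"
  by (cases a; cases b; cases a'; cases b') (auto simp: upper_add_def)
lemma neg_upper3:
  fixes a b e :: ereal
  shows "c +\<^sub>l (- (a +\<^sub>u b +\<^sub>u e)) = c +\<^sub>l (- a) +\<^sub>l (- b) +\<^sub>l (- e)"
  by (cases a; cases b; cases e; cases c) (auto simp: upper_add_def lower_add_def)
lemma lower_mono2:
  fixes a b c :: ereal
  shows "b \<le> b' \<Longrightarrow> c +\<^sub>l b \<le> c +\<^sub>l b'"
  by (cases b; cases b'; cases c) (auto simp: lower_add_def)
lemma lower_sup:
  fixes c R :: ereal and u :: "'i \<Rightarrow> ereal"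
  assumes "\<And>i. c +\<^sub>l u i \<le> R"
  shows "c +\<^sub>l (SUP i. u i) \<le> R"
proof (cases c)
  case (real r)
  have "\<And>i. u i + c \<le> R" using assms[unfolded lower_add_def] real by (simp add: add.commute)
  then have "(SUP i. u i) + c \<le> R" by (rule SUP_ereal_le_addI) (simp add: real)
  then show ?thesis using real by (simp add: lower_add_def add.commute)
next
  case PInf
  show ?thesis
  proof (cases "(SUP i. u i) = -\<infinity>")
    case True then show ?thesis using PInf by (simp add: lower_add_def)
  next
    case False
    have "\<exists>i. u i \<noteq> -\<infinity>"
    proof (rule ccontr)
      assume "\<not> (\<exists>i. u i \<noteq> -\<infinity>)"
      then have "u = (\<lambda>_. -\<infinity>)" by auto
      then show False using False by simp
    qed
    then obtain i where "u i \<noteq> -\<infinity>" by blast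
    then have "R = \<infinity>" using assms[of i] PInf by (simp add: lower_add_def split: if_splits)
    then show ?thesis by simp
  qed
next
  case MInf
  then show ?thesis by (cases "SUP i. u i") (simp_all add: lower_add_def)
qed

theorem proposition1:
  fixes c :: "'x \<Rightarrow> 'xs \<Rightarrow> ereal"
    and d1 :: "'y1 \<Rightarrow> 'y1s \<Rightarrow> ereal"
    and d2 :: "'y2 \<Rightarrow> 'y2s \<Rightarrow> ereal"
    and \<phi> :: "'y1 \<Rightarrow> 'x \<Rightarrow> 'y2 \<Rightarrow> ereal"
    and f :: "'x \<Rightarrow> ereal" and g1 :: "'y1 \<Rightarrow> ereal" and g2 :: "'y2 \<Rightarrow> ereal"
  assumes "\<forall>x. f x \<ge> inf_conv g1 \<phi> g2 x"
  shows "\<forall>xs. conj_c c f xs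
           \<le> inf_conv (conj_neg d1 g1) (phi_sharp c d1 d2 \<phi>) (conj_neg d2 g2) xs"
proof
  fix xs
  show "conj_c c f xs
           \<le> inf_conv (conj_neg d1 g1) (phi_sharp c d1 d2 \<phi>) (conj_neg d2 g2) xs"
    unfolding inf_conv_def conj_c_def
  proof (rule INF_greatest, clarify)
    fix y1s y2s
    let ?R = "conj_neg d1 g1 y1s +\<^sub>u phi_sharp c d1 d2 \<phi> y1s xs y2s +\<^sub>u conj_neg d2 g2 y2s"
    show "(SUP x\<in>UNIV. c x xs +\<^sub>l - f x) \<le> ?R"
    proof (rule SUP_least)
      fix x
      let ?t = "\<lambda>(y1, y2). g1 y1 +\<^sub>u \<phi> y1 x y2 +\<^sub>u g2 y2"
      have "- f x \<le> - (INF p. ?t p)"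
        using assms unfolding inf_conv_def by (simp add: case_prod_beta)
      also have "\<dots> = (SUP p. - ?t p)" by (simp add: ereal_SUP_uminus_eq)
      finally have "c x xs +\<^sub>l - f x \<le> c x xs +\<^sub>l (SUP p. - ?t p)" by (rule lower_mono2)
      also have "\<dots> \<le> ?R"
      proof (rule lower_sup)
        fix p :: "'y1 \<times> 'y2"
        obtain y1 y2 where p: "p = (y1, y2)" by (cases p)
        have "c x xs +\<^sub>l - ?t (y1, y2) = c x xs +\<^sub>l - g1 y1 +\<^sub>l - \<phi> y1 x y2 +\<^sub>l - g2 y2"
          by (simp only: prod.case neg_upper3)
        also have "\<dots> \<le> ((- d1 y1 y1s) +\<^sub>l - g1 y1) +\<^sub>u (c x xs +\<^sub>l d1 y1 y1s +\<^sub>l d2 y2 y2s +\<^sub>l - \<phi> y1 x y2) +\<^sub>u ((- d2 y2 y2s) +\<^sub>l - g2 y2)"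
          by (rule key4)
        also have "\<dots> \<le> ?R"
        proof -
          have A: "(- d1 y1 y1s) +\<^sub>l - g1 y1 \<le> conj_neg d1 g1 y1s"
            unfolding conj_neg_def by (rule SUP_upper) simp
          have B: "c x xs +\<^sub>l d1 y1 y1s +\<^sub>l d2 y2 y2s +\<^sub>l - \<phi> y1 x y2 \<le> phi_sharp c d1 d2 \<phi> y1s xs y2s"
            unfolding phi_sharp_def by (rule SUP_upper2[where i="(y1,x,y2)"]) simp_all
          have C: "(- d2 y2 y2s) +\<^sub>l - g2 y2 \<le> conj_neg d2 g2 y2s"
            unfolding conj_neg_def by (rule SUP_upper) simp
          show ?thesis by (rule upper_mono[OF upper_mono[OF A B] C])
        qed
        finally show "c x xs +\<^sub>l - ?t p \<le> ?R" unfolding p .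
      qed
      finally show "c x xs +\<^sub>l - f x \<le> ?R" .
    qed
  qed
qed
end
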